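(* Let $m\ge 2$ be an even integer and $k$ an integer with $\gcd(k,m)=1$. Let $\alpha\in\mathbb{F}_{2^m}$ be nonzero and not a cube in $\mathbb{F}_{2^m}$, and let $i$ be an even nonnegative integer. Then the function $f:\mathbb{F}_{2^m}^2\to\mathbb{F}_{2^m}^2$ (identified additively with $\mathbb{F}_{2^{2m}}$) given by $$f(x,y)=\big(x^{2^k+1}+\alpha\, y^{(2^k+1)2^i},\ xy\big)$$ is APN.
   Context: A function $f$ on $\mathbb{F}_{2^{2m}}$ is almost perfect nonlinear (APN) if for every $a\neq 0$ and every $b$ the equation $f(x+a)-f(x)=b$ has at most two solutions. *)

theory Defs
  imports Main "HOL-Library.Product_Plus"
begin

definition APN :: "('b::{ab_group_add,finite} \<Rightarrow> 'b) \<Rightarrow> bool" where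
  "APN f \<longleftrightarrow> (\<forall>a b. a \<noteq> 0 \<longrightarrow> card {x. f (x + a) - f x = b} \<le> 2)"

definition is_cube :: "'a::monoid_mult \<Rightarrow> bool" where
  "is_cube a \<longleftrightarrow> (\<exists>z. a = z ^ 3)"

end

theory Submission
  imports Defs
begin

lemma fermat_fin:
  fixes x :: "'a::{field,finite}"
  shows "x ^ card (UNIV::'a set) = x"
proof (cases "x = 0")
  case True
  have "card (UNIV::'a set) > 0" by (simp add: finite_UNIV_card_ge_0)
  then show ?thesis using True by (simp add: power_0_left)
next
  case False
  let ?S = "UNIV - {0::'a}"
  have fin: "finite ?S" by simp
  have bij: "bij_betw (\<lambda>y. x * y) ?S ?S"
    unfolding bij_betw_def inj_on_def
  proof (intro conjI ballI impI)
    show "(*) x ` ?S = ?S"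
    proof
      show "(*) x ` ?S \<subseteq> ?S" using False by auto
      show "?S \<subseteq> (*) x ` ?S"
      proof
        fix z assume z: "z \<in> ?S"
        then have "z = x * (inverse x * z)" "inverse x * z \<in> ?S" using False by auto
        then show "z \<in> (*) x ` ?S" by blast
      qed
    qed
  qed (use False in auto)
  have "prod (\<lambda>y. y) ?S = prod (\<lambda>y. x * y) ?S"
    using prod.reindex_bij_betw[OF bij, of "\<lambda>y. y"] by simp
  also have "\<dots> = x ^ card ?S * prod (\<lambda>y. y) ?S"
    by (simp add: prod.distrib)
  finally have eq: "prod (\<lambda>y. y) ?S = x ^ card ?S * prod (\<lambda>y. y) ?S" .
  have nz: "prod (\<lambda>y. y) ?S \<noteq> 0" by (simp add: prod_zero_iff)
  from eq nz have "x ^ card ?S = 1" by simp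
  moreover have "card ?S + 1 = card (UNIV::'a set)"
  proof -
    have "card (UNIV::'a set) > 0" by (simp add: finite_UNIV_card_ge_0)
    moreover have "card ?S = card (UNIV::'a set) - 1" by (rule card_Diff_singleton) simp
    ultimately show ?thesis by linarith
  qed
  ultimately have "x ^ card (UNIV::'a set) = x ^ card ?S * x"
    by (simp only: power_add power_one_right flip: \<open>card ?S + 1 = card (UNIV::'a set)\<close>)
  then show ?thesis using \<open>x ^ card ?S = 1\<close> by simp
qed

lemma char2_minus:
  fixes x y :: "'a::field"
  assumes "(2::'a) = 0"
  shows "x - y = x + y"
proof -
  have "y + y = 2 * y" by simp
  then have "y + y = 0" using assms by simp
  then show ?thesis by (simp add: diff_eq_eq add.assoc)
qed

lemma frob_add:
  fixes x y :: "'a::field"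
  assumes "(2::'a) = 0"
  shows "(x + y) ^ (2 ^ n) = x ^ (2 ^ n) + y ^ (2 ^ n)"
proof (induction n)
  case 0 then show ?case by simp
next
  case (Suc n)
  have sq: "(u + v)^2 = u^2 + v^2" for u v :: 'a
  proof -
    have "(u+v)^2 = u^2 + v^2 + 2*u*v" by (simp add: power2_eq_square algebra_simps)
    then show ?thesis using assms by simp
  qed
  have "(x + y) ^ (2 ^ Suc n) = ((x+y)^(2^n))^2" by (simp only: power_Suc2 power_mult)
  also have "\<dots> = (x ^ (2 ^ n) + y ^ (2 ^ n))^2" using Suc by simp
  also have "\<dots> = (x ^ (2 ^ n))^2 + (y ^ (2 ^ n))^2" by (rule sq)
  also have "\<dots> = x ^ (2 ^ Suc n) + y ^ (2 ^ Suc n)" by (simp only: power_Suc2 power_mult)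
  finally show ?case .
qed

lemma frob_iter:
  fixes t :: "'a::field"
  assumes "t ^ (2 ^ n) = t"
  shows "t ^ (2 ^ (n * j)) = t"
proof (induction j)
  case 0 then show ?case by simp
next
  case (Suc j)
  have e: "n * Suc j = n*j + n" by simp
  have "t ^ (2 ^ (n * Suc j)) = (t ^ (2 ^ (n*j))) ^ (2 ^ n)"
    by (simp only: e power_add power_mult)
  then show ?case using Suc assms by simp
qed

lemma fixed01:
  fixes t :: "'a::{field,finite}" and m k :: nat
  assumes "card (UNIV :: 'a set) = 2 ^ m" and "coprime k m" and "m \<ge> 2"
    and "t ^ (2 ^ k) = t"
  shows "t = 0 \<or> t = 1"
proof -
  have k0: "k \<noteq> 0" using assms(2,3) by (cases "k = 0") auto
  obtain a b where ab: "k * a = m * b + gcd k m" using bezout_nat[OF k0] by blast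
  then have ab1: "k * a = m * b + 1" using assms(2) by simp
  have tm: "t ^ (2 ^ m) = t" using fermat_fin[of t] assms(1) by simp
  have "t = t ^ (2 ^ (k * a))" using frob_iter[OF assms(4)] by simp
  also have "\<dots> = (t ^ (2 ^ (m * b))) ^ 2" unfolding ab1
    by (simp only: power_add power_one_right power_mult)
  also have "\<dots> = t ^ 2" using frob_iter[OF tm] by simp
  finally have "t * (t - 1) = 0" by (simp add: power2_eq_square algebra_simps)
  then show ?thesis by simp
qed

lemma char2_eq:
  fixes s t :: "'a::field"
  assumes "(2::'a) = 0" and "s + t = 0"
  shows "s = t"
proof -
  have "s = s - t + t" by simp
  also have "s - t = s + t" by (rule char2_minus[OF assms(1)])
  finally have "s = t + 0" using assms(2) by (simp add: algebra_simps)
  then show ?thesis by simp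
qed

lemma fixed0c:
  fixes z c :: "'a::{field,finite}" and m k :: nat
  assumes "card (UNIV :: 'a set) = 2 ^ m" and "coprime k m" and "m \<ge> 2"
    and "c \<noteq> 0" and "z ^ (2 ^ k) * c = c ^ (2 ^ k) * z"
  shows "z = 0 \<or> z = c"
proof -
  have "(z / c) ^ (2 ^ k) = z / c"
    using assms(4,5) by (simp add: power_divide field_simps)
  then have "z / c = 0 \<or> z / c = 1" using fixed01[OF assms(1-3)] by blast
  then show ?thesis using assms(4) by (auto simp: field_simps)
qed

lemma three_dvd_odd: "odd (k::nat) \<Longrightarrow> (3::nat) dvd 2 ^ k + 1"
proof -
  assume "odd k"
  then obtain j where k: "k = 2 * j + 1" using oddE by blast
  have "(4::nat) ^ j mod 3 = 1"
    by (induction j) (simp_all add: mod_mult_right_eq[symmetric])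
  then obtain e where e: "(4::nat) ^ j = 3 * e + 1" by (metis div_mult_mod_eq mult.commute)
  have "(2::nat) ^ k = 2 * 4 ^ j" unfolding k by (simp add: power_mult)
  then have "(2::nat) ^ k + 1 = 3 * (2 * e + 1)" using e by simp
  then show ?thesis by (metis dvd_triv_left)
qed

lemma three_even: "even (i::nat) \<Longrightarrow> \<exists>d. (2::nat) ^ i = 3 * d + 1"
proof -
  assume "even i"
  then obtain j where i: "i = 2 * j" by blast
  have "(4::nat) ^ j mod 3 = 1"
    by (induction j) (simp_all add: mod_mult_right_eq[symmetric])
  moreover have "(2::nat) ^ i = 4 ^ j" unfolding i by (simp add: power_mult)
  ultimately show ?thesis by (metis div_mult_mod_eq mult.commute)
qed

lemma kernel:
  fixes \<alpha> a1 a2 z1 z2 :: "'a::{field,finite}" and m k i :: nat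
  assumes card: "card (UNIV :: 'a set) = 2 ^ m" and two: "(2::'a) = 0"
    and m2: "m \<ge> 2" and cop: "coprime k m" and kodd: "odd k"
    and an: "\<alpha> \<noteq> 0" and nc: "\<not> is_cube \<alpha>" and ie: "even i"
    and anz: "a1 \<noteq> 0 \<or> a2 \<noteq> 0"
    and E1: "z1 ^ (2^k) * a1 + a1 ^ (2^k) * z1 + \<alpha> * (z2 ^ (2^k) * a2 + a2 ^ (2^k) * z2) ^ (2 ^ i) = 0"
    and E2: "z1 * a2 + a1 * z2 = 0"
  shows "(z1 = 0 \<and> z2 = 0) \<or> (z1 = a1 \<and> z2 = a2)"
proof -
  have E2': "z1 * a2 = a1 * z2" using char2_eq[OF two E2] .
  have qpos: "(2::nat) ^ k > 0" by simp
  show ?thesis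
  proof (cases "a1 = 0")
    case True
    then have a2: "a2 \<noteq> 0" using anz by simp
    have z1: "z1 = 0" using E2' True a2 by simp
    have "\<alpha> * (z2 ^ (2^k) * a2 + a2 ^ (2^k) * z2) ^ (2 ^ i) = 0"
      using E1 True z1 qpos by (simp add: power_0_left)
    then have "z2 ^ (2^k) * a2 + a2 ^ (2^k) * z2 = 0" using an by simp
    then have "z2 ^ (2^k) * a2 = a2 ^ (2^k) * z2" by (rule char2_eq[OF two])
    then have "z2 = 0 \<or> z2 = a2" using fixed0c[OF card cop m2 a2] by blast
    then show ?thesis using z1 True by auto
  next
    case a1: False
    show ?thesis
    proof (cases "a2 = 0")
      case True
      have z2: "z2 = 0" using E2' True a1 by simp
      have "z1 ^ (2^k) * a1 + a1 ^ (2^k) * z1 = 0"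
        using E1 True z2 qpos by (simp add: power_0_left)
      then have "z1 ^ (2^k) * a1 = a1 ^ (2^k) * z1" by (rule char2_eq[OF two])
      then have "z1 = 0 \<or> z1 = a1" using fixed0c[OF card cop m2 a1] by blast
      then show ?thesis using z2 True by auto
    next
      case a2: False
      define t where "t = z1 / a1"
      have z1t: "z1 = t * a1" using a1 unfolding t_def by simp
      have z2t: "z2 = t * a2" using E2' a1 a2 unfolding t_def by (simp add: field_simps)
      define q where "q = (2::nat) ^ k"
      define u where "u = t ^ q + t"
      have B1: "z1 ^ q * a1 + a1 ^ q * z1 = a1 ^ (q+1) * u"
        unfolding z1t u_def by (simp add: power_mult_distrib algebra_simps)
      have B2: "z2 ^ q * a2 + a2 ^ q * z2 = a2 ^ (q+1) * u"
        unfolding z2t u_def by (simp add: power_mult_distrib algebra_simps)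
      have E: "a1 ^ (q+1) * u + \<alpha> * (a2 ^ (q+1) * u) ^ (2 ^ i) = 0"
        using E1 B1 B2 unfolding q_def by simp
      show ?thesis
      proof (cases "u = 0")
        case True
        then have "t ^ q = t" unfolding u_def by (rule char2_eq[OF two])
        then have "t = 0 \<or> t = 1" using fixed01[OF card cop m2] unfolding q_def by blast
        then show ?thesis using z1t z2t by auto
      next
        case unz: False
        obtain c where c: "q + 1 = 3 * c" using three_dvd_odd[OF kodd] unfolding q_def by blast
        obtain d where d: "(2::nat) ^ i = 3 * d + 1" using three_even[OF ie] by blast
        define w where "w = a2 ^ (q+1) * u"
        have wnz: "w \<noteq> 0" using a2 unz unfolding w_def by simp
        have "\<alpha> * w ^ (2 ^ i) = a1 ^ (q+1) * u"
          using char2_eq[OF two E] unfolding w_def by simp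
        then have "\<alpha> * ((w ^ d) ^ 3 * w) = (a1 ^ c) ^ 3 * u"
          unfolding d c by (simp add: power_add power_mult mult.commute)
        then have "\<alpha> * ((w ^ d) ^ 3 * (a2 ^ c) ^ 3 * u) = (a1 ^ c) ^ 3 * u"
          unfolding w_def c by (simp add: power_mult mult.commute mult.left_commute)
        then have "\<alpha> * (w ^ d * a2 ^ c) ^ 3 = (a1 ^ c) ^ 3"
          using unz by (simp add: power_mult_distrib mult.assoc)
        then have "\<alpha> = (a1 ^ c / (w ^ d * a2 ^ c)) ^ 3"
          using wnz a2 by (simp add: power_divide field_simps)
        then have "is_cube \<alpha>" unfolding is_cube_def by blast
        then show ?thesis using nc by simp
      qed
    qed
  qed
qed

theorem corollary4:
  fixes \<alpha> :: "'a::{field,finite}" and m k i :: nat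
  assumes "card (UNIV :: 'a set) = 2 ^ m" and "(2::'a) = 0"
    and "m \<ge> 2" and "even m" and "coprime k m"
    and "\<alpha> \<noteq> 0" and "\<not> is_cube \<alpha>"
    and "even i"
  shows "APN (\<lambda>(x, y). (x ^ (2 ^ k + 1) + \<alpha> * y ^ ((2 ^ k + 1) * 2 ^ i), x * y))"
proof -
  note card = assms(1) and two = assms(2)
  have kodd: "odd k" using assms(4,5) by auto
  define q where "q = (2::nat) ^ k"
  define f where "f = (\<lambda>(x::'a, y::'a). (x ^ (2 ^ k + 1) + \<alpha> * y ^ ((2 ^ k + 1) * 2 ^ i), x * y))"
  define P where "P = (\<lambda>x::'a. x ^ (q + 1))"
  define B where "B = (\<lambda>x a::'a. x ^ q * a + a ^ q * x)"
  define G where "G = (\<lambda>w::'a. w ^ (2 ^ i))"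
  have Gadd: "G (v + w) = G v + G w" for v w
    unfolding G_def by (rule frob_add[OF two])
  have Badd: "B (x + y) a = B x a + B y a" for x y a
    unfolding B_def q_def using frob_add[OF two, of x y k] by (simp add: algebra_simps)
  have Pexp: "P (x + a) = P x + B x a + P a" for x a
  proof -
    have "P (x + a) = (x + a) ^ q * (x + a)" unfolding P_def by simp
    also have "\<dots> = (x ^ q + a ^ q) * (x + a)" unfolding q_def using frob_add[OF two, of x a k] by simp
    finally show ?thesis unfolding P_def B_def by (simp add: algebra_simps)
  qed
  have fE: "f (x1, x2) = (P x1 + \<alpha> * G (P x2), x1 * x2)" for x1 x2
    unfolding f_def P_def G_def q_def by (simp only: power_mult prod.case)
  define d1 where "d1 = (\<lambda>x1 x2 a1 a2. B x1 a1 + P a1 + \<alpha> * G (B x2 a2 + P a2))"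
  define d2 where "d2 = (\<lambda>x1 x2 a1 a2::'a. x1 * a2 + a1 * x2 + a1 * a2)"
  have dE: "f ((x1, x2) + (a1, a2)) - f (x1, x2) = (d1 x1 x2 a1 a2, d2 x1 x2 a1 a2)" for x1 x2 a1 a2
  proof -
    have "G (P (x2 + a2)) = G (P x2) + G (B x2 a2 + P a2)"
      using Pexp[of x2 a2] Gadd[of "P x2" "B x2 a2 + P a2"] by (simp add: add.assoc)
    moreover have "f ((x1, x2) + (a1, a2)) = f (x1 + a1, x2 + a2)" by simp
    ultimately show ?thesis unfolding fE d1_def d2_def using Pexp[of x1 a1]
      by (simp add: algebra_simps)
  qed
  have d1add: "d1 (y1 + z1) (y2 + z2) a1 a2 = d1 y1 y2 a1 a2 + (B z1 a1 + \<alpha> * G (B z2 a2))" for y1 y2 z1 z2 a1 a2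
  proof -
    have "G (B (y2 + z2) a2 + P a2) = G (B y2 a2 + P a2) + G (B z2 a2)"
      using Badd[of y2 z2 a2] Gadd[of "B y2 a2 + P a2" "B z2 a2"] by (simp add: algebra_simps)
    then show ?thesis unfolding d1_def using Badd[of y1 z1 a1] by (simp add: algebra_simps)
  qed
  have d2add: "d2 (y1 + z1) (y2 + z2) a1 a2 = d2 y1 y2 a1 a2 + (z1 * a2 + a1 * z2)" for y1 y2 z1 z2 a1 a2
    unfolding d2_def by (simp add: algebra_simps)
  have main: "card {x. f (x + a) - f x = b} \<le> 2" if anz: "a \<noteq> 0" for a b
  proof (cases "{x. f (x + a) - f x = b} = {}")
    case True then show ?thesis by (simp only: card.empty)
  next
    case False
    then obtain x0 where x0: "f (x0 + a) - f x0 = b" by blast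
    obtain a1 a2 where a: "a = (a1, a2)" by fastforce
    obtain y1 y2 where y: "x0 = (y1, y2)" by fastforce
    have sub: "{x. f (x + a) - f x = b} \<subseteq> {x0, x0 + a}"
    proof
      fix x assume "x \<in> {x. f (x + a) - f x = b}"
      then have xe: "f (x + a) - f x = f (x0 + a) - f x0" using x0 by simp
      obtain z1 z2 where z: "x = (y1 + z1, y2 + z2)"
      proof -
        have "x = (y1 + (fst x - y1), y2 + (snd x - y2))" by simp
        then show ?thesis using that by blast
      qed
      have "(d1 (y1 + z1) (y2 + z2) a1 a2, d2 (y1 + z1) (y2 + z2) a1 a2) = (d1 y1 y2 a1 a2, d2 y1 y2 a1 a2)"
        using xe unfolding z y a dE .
      then have e1: "B z1 a1 + \<alpha> * G (B z2 a2) = 0" and e2: "z1 * a2 + a1 * z2 = 0"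
        unfolding d1add d2add by simp_all
      have "(z1 = 0 \<and> z2 = 0) \<or> (z1 = a1 \<and> z2 = a2)"
      proof -
        have an0: "a1 \<noteq> 0 \<or> a2 \<noteq> 0" using anz a by (auto simp: zero_prod_def)
        have e1': "z1 ^ (2^k) * a1 + a1 ^ (2^k) * z1 + \<alpha> * (z2 ^ (2^k) * a2 + a2 ^ (2^k) * z2) ^ (2 ^ i) = 0"
          using e1 unfolding B_def G_def q_def by simp
        show ?thesis by (rule kernel[OF card two assms(3) assms(5) kodd assms(6) assms(7) assms(8) an0 e1' e2])
      qed
      then show "x \<in> {x0, x0 + a}" using z y a by auto
    qed
    have "card {x. f (x + a) - f x = b} \<le> card {x0, x0 + a}"
      by (rule card_mono[OF _ sub]) simp
    also have "\<dots> \<le> 2" by (simp add: card_insert_le_m1)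
    finally show ?thesis .
  qed
  show ?thesis unfolding APN_def f_def[symmetric] using main by blast
qed

end
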